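(* Let $A\in\mathbb{C}^{n\times m}$, $\alpha_1\ge1/\sqrt{n}$, $\alpha_2\ge1/\sqrt{m}$, $B\in\mathbb{C}^{l\times n}$, $b\in\mathbb{R}^l$, $D\in\mathbb{C}^{q\times m}$, $d\in\mathbb{R}^q$, and let $$S_1=\{u\in\mathbb{C}^n:\|u\|\le\alpha_1,\ \operatorname{Re}(u)\ge0,\ \mathbf 1_n^Tu=1,\ \operatorname{Re}(Bu)\le b\},\quad S_2=\{v\in\mathbb{C}^m:\|v\|\le\alpha_2,\ \operatorname{Re}(v)\ge0,\ \mathbf 1_m^Tv=1,\ \operatorname{Re}(Dv)\ge d\}.$$ Assume there exist $u\in S_1$, $v\in S_2$ for which all defining inequality constraints of $S_1$ and $S_2$ hold strictly. Call $(u^\star,v^\star)\in S_1\times S_2$ a saddle-point equilibrium if $u^\star$ maximizes $\operatorname{Re}(u^HAv^\star)$ over $u\in S_1$ and $v^\star$ minimizes $\operatorname{Re}(u^{\star H}Av)$ over $v\in S_2$. Consider the problems $$\text{(P)}\quad \min_{v,\lambda_1,\beta_1,\rho_1,r_1}\ \lambda_1^Tb+\alpha_1\|\beta_1\|+\operatorname{Re}(\rho_1)\quad\text{s.t.}\quad Av-B^H\lambda_1-\beta_1+r_1-\bar\rho_1\mathbf 1_n=0,\ \operatorname{Re}(Dv)\ge d,\ \|v\|\le\alpha_2,\ \mathbf 1_m^Tv=1,\ \operatorname{Re}(v)\ge0,\ r_1\ge0,\ \lambda_1\ge0,$$ over $v\in\mathbb{C}^m$, $\lambda_1\in\mathbb{R}^l$,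 $\beta_1\in\mathbb{C}^n$, $\rho_1\in\mathbb{C}$, $r_1\in\mathbb{R}^n$, and $$\text{(D)}\quad \max_{u,\lambda_2,\beta_2,\rho_2,r_2}\ \lambda_2^Td-\alpha_2\|\beta_2\|-\operatorname{Re}(\rho_2)\quad\text{s.t.}\quad A^Hu-D^H\lambda_2+\beta_2-r_2+\bar\rho_2\mathbf 1_m=0,\ \operatorname{Re}(Bu)\le b,\ \|u\|\le\alpha_1,\ \mathbf 1_n^Tu=1,\ \operatorname{Re}(u)\ge0,\ r_2\ge0,\ \lambda_2\ge0,$$ over $u\in\mathbb{C}^n$, $\lambda_2\in\mathbb{R}^q$, $\beta_2\in\mathbb{C}^m$, $\rho_2\in\mathbb{C}$, $r_2\in\mathbb{R}^m$. Then $(u^\star,v^\star)$ is a saddle-point equilibrium if and only if there exist $(\rho_1^\star,r_1^\star,\lambda_1^\star,\beta_1^\star)$ and $(\rho_2^\star,r_2^\star,\lambda_2^\star,\beta_2^\star)$ such that $(v^\star,\lambda_1^\star,\beta_1^\star,\rho_1^\star,r_1^\star)$ is optimal for (P) and $(u^\star,\lambda_2^\star,\beta_2^\star,\rho_2^\star,r_2^\star)$ is optimal for (D).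
   Context: $\|\cdot\|$ is the Euclidean norm, $^H$ is conjugate transpose, $\bar\rho$ is complex conjugation, $\mathbf 1_k$ is the all-ones vector in $\mathbb{R}^k$, and inequalities between real vectors are componentwise. *)

theory Defs
  imports "HOL-Analysis.Analysis"
begin

text \<open>Complex vectors are elements of complex ^ 'n; a matrix in C^{n x m} is complex ^ 'm ^ 'n
  (rows indexed by 'n). Real vectors are real ^ 'l. The Euclidean norm is the library norm.\<close>

definition ctrans :: "complex ^ 'm ^ 'n \<Rightarrow> complex ^ 'n ^ 'm" where
  "ctrans A = (\<chi> j i. cnj (A $ i $ j))"

definition cinner :: "complex ^ 'n \<Rightarrow> complex ^ 'n \<Rightarrow> complex" where
  "cinner u w = (\<Sum>i\<in>UNIV. cnj (u $ i) * w $ i)"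

definition cvec :: "real ^ 'n \<Rightarrow> complex ^ 'n" where
  "cvec x = (\<chi> i. complex_of_real (x $ i))"

definition ones :: "complex ^ 'n" where
  "ones = (\<chi> i. 1)"

definition S1 :: "real \<Rightarrow> complex ^ 'n ^ 'l \<Rightarrow> real ^ 'l \<Rightarrow> (complex ^ 'n) set" where
  "S1 \<alpha>1 B b = {u. norm u \<le> \<alpha>1 \<and> (\<forall>i. 0 \<le> Re (u $ i)) \<and> (\<Sum>i\<in>UNIV. u $ i) = 1
                    \<and> (\<forall>k. Re ((B *v u) $ k) \<le> b $ k)}"

definition S2 :: "real \<Rightarrow> complex ^ 'm ^ 'q \<Rightarrow> real ^ 'q \<Rightarrow> (complex ^ 'm) set" where
  "S2 \<alpha>2 D d = {v. norm v \<le> \<alpha>2 \<and> (\<forall>i. 0 \<le> Re (v $ i)) \<and> (\<Sum>i\<in>UNIV. v $ i) = 1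
                    \<and> (\<forall>k. d $ k \<le> Re ((D *v v) $ k))}"

definition saddle_point ::
  "complex ^ 'm ^ 'n \<Rightarrow> (complex ^ 'n) set \<Rightarrow> (complex ^ 'm) set
     \<Rightarrow> complex ^ 'n \<Rightarrow> complex ^ 'm \<Rightarrow> bool" where
  "saddle_point A X Y us vs \<longleftrightarrow> us \<in> X \<and> vs \<in> Y
     \<and> (\<forall>u\<in>X. Re (cinner u (A *v vs)) \<le> Re (cinner us (A *v vs)))
     \<and> (\<forall>v\<in>Y. Re (cinner us (A *v vs)) \<le> Re (cinner us (A *v v)))"

definition P_feasible ::
  "complex ^ 'm ^ 'n \<Rightarrow> complex ^ 'n ^ 'l \<Rightarrow> complex ^ 'm ^ 'q \<Rightarrow> real ^ 'q \<Rightarrow> real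
   \<Rightarrow> complex ^ 'm \<Rightarrow> real ^ 'l \<Rightarrow> complex ^ 'n \<Rightarrow> complex \<Rightarrow> real ^ 'n \<Rightarrow> bool" where
  "P_feasible A B D d \<alpha>2 v lam1 \<beta>1 \<rho>1 r1 \<longleftrightarrow>
     (A *v v) - (ctrans B *v cvec lam1) - \<beta>1 + cvec r1 - (\<chi> i. cnj \<rho>1) = 0
     \<and> (\<forall>k. d $ k \<le> Re ((D *v v) $ k)) \<and> norm v \<le> \<alpha>2 \<and> (\<Sum>i\<in>UNIV. v $ i) = 1
     \<and> (\<forall>i. 0 \<le> Re (v $ i)) \<and> (\<forall>i. 0 \<le> r1 $ i) \<and> (\<forall>k. 0 \<le> lam1 $ k)"

definition P_obj :: "real ^ 'l \<Rightarrow> real \<Rightarrow> real ^ 'l \<Rightarrow> complex ^ 'n \<Rightarrow> complex \<Rightarrow> real" where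
  "P_obj b \<alpha>1 lam1 \<beta>1 \<rho>1 = (\<Sum>k\<in>UNIV. lam1 $ k * b $ k) + \<alpha>1 * norm \<beta>1 + Re \<rho>1"

definition P_optimal ::
  "complex ^ 'm ^ 'n \<Rightarrow> complex ^ 'n ^ 'l \<Rightarrow> real ^ 'l \<Rightarrow> complex ^ 'm ^ 'q \<Rightarrow> real ^ 'q
   \<Rightarrow> real \<Rightarrow> real
   \<Rightarrow> complex ^ 'm \<Rightarrow> real ^ 'l \<Rightarrow> complex ^ 'n \<Rightarrow> complex \<Rightarrow> real ^ 'n \<Rightarrow> bool" where
  "P_optimal A B b D d \<alpha>1 \<alpha>2 v lam1 \<beta>1 \<rho>1 r1 \<longleftrightarrow>
     P_feasible A B D d \<alpha>2 v lam1 \<beta>1 \<rho>1 r1 \<and>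
     (\<forall>v' lam1' \<beta>1' \<rho>1' r1'. P_feasible A B D d \<alpha>2 v' lam1' \<beta>1' \<rho>1' r1' \<longrightarrow>
        P_obj b \<alpha>1 lam1 \<beta>1 \<rho>1 \<le> P_obj b \<alpha>1 lam1' \<beta>1' \<rho>1')"

definition D_feasible ::
  "complex ^ 'm ^ 'n \<Rightarrow> complex ^ 'n ^ 'l \<Rightarrow> real ^ 'l \<Rightarrow> complex ^ 'm ^ 'q \<Rightarrow> real
   \<Rightarrow> complex ^ 'n \<Rightarrow> real ^ 'q \<Rightarrow> complex ^ 'm \<Rightarrow> complex \<Rightarrow> real ^ 'm \<Rightarrow> bool" where
  "D_feasible A B b D \<alpha>1 u lam2 \<beta>2 \<rho>2 r2 \<longleftrightarrow>
     (ctrans A *v u) - (ctrans D *v cvec lam2) + \<beta>2 - cvec r2 + (\<chi> i. cnj \<rho>2) = 0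
     \<and> (\<forall>k. Re ((B *v u) $ k) \<le> b $ k) \<and> norm u \<le> \<alpha>1 \<and> (\<Sum>i\<in>UNIV. u $ i) = 1
     \<and> (\<forall>i. 0 \<le> Re (u $ i)) \<and> (\<forall>i. 0 \<le> r2 $ i) \<and> (\<forall>k. 0 \<le> lam2 $ k)"

definition D_obj :: "real ^ 'q \<Rightarrow> real \<Rightarrow> real ^ 'q \<Rightarrow> complex ^ 'm \<Rightarrow> complex \<Rightarrow> real" where
  "D_obj d \<alpha>2 lam2 \<beta>2 \<rho>2 = (\<Sum>k\<in>UNIV. lam2 $ k * d $ k) - \<alpha>2 * norm \<beta>2 - Re \<rho>2"

definition D_optimal ::
  "complex ^ 'm ^ 'n \<Rightarrow> complex ^ 'n ^ 'l \<Rightarrow> real ^ 'l \<Rightarrow> complex ^ 'm ^ 'q \<Rightarrow> real ^ 'q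
   \<Rightarrow> real \<Rightarrow> real
   \<Rightarrow> complex ^ 'n \<Rightarrow> real ^ 'q \<Rightarrow> complex ^ 'm \<Rightarrow> complex \<Rightarrow> real ^ 'm \<Rightarrow> bool" where
  "D_optimal A B b D d \<alpha>1 \<alpha>2 u lam2 \<beta>2 \<rho>2 r2 \<longleftrightarrow>
     D_feasible A B b D \<alpha>1 u lam2 \<beta>2 \<rho>2 r2 \<and>
     (\<forall>u' lam2' \<beta>2' \<rho>2' r2'. D_feasible A B b D \<alpha>1 u' lam2' \<beta>2' \<rho>2' r2' \<longrightarrow>
        D_obj d \<alpha>2 lam2' \<beta>2' \<rho>2' \<le> D_obj d \<alpha>2 lam2 \<beta>2 \<rho>2)"

end

theory Submission
  imports Defs
begin

lemma Re_cinner: "Re (cinner x y) = inner x y"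
  by (simp add: cinner_def inner_vec_def inner_complex_def Re_sum)

lemma cinner_ctrans: "cinner v (ctrans A *v u) = cnj (cinner u (A *v v))"
  by (simp add: cinner_def ctrans_def matrix_vector_mult_def sum_distrib_left sum_distrib_right mult_ac)
     (rule sum.swap)

lemma Re_cinner_Bl: "Re (cinner u (ctrans B *v cvec l)) = (\<Sum>k\<in>UNIV. l $ k * Re ((B *v u) $ k))"
  apply (simp add: cinner_def ctrans_def matrix_vector_mult_def cvec_def Re_sum sum_distrib_left sum_distrib_right mult_ac)
  apply (subst sum.swap) apply (simp add: right_diff_distrib sum_subtractf)
  done

lemma Re_cinner_cvec: "Re (cinner u (cvec r)) = (\<Sum>i\<in>UNIV. r $ i * Re (u $ i))"
  by (simp add: cinner_def cvec_def Re_sum mult_ac)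

lemma cinner_const: "cinner u (\<chi> i. c) = cnj (\<Sum>i\<in>UNIV. u $ i) * c"
  by (simp add: cinner_def sum_distrib_right)

lemma Re_cinner_le: "Re (cinner u w) \<le> norm u * norm w"
  by (simp add: Re_cinner norm_cauchy_schwarz)


lemma cinner_add: "cinner u (x + y) = cinner u x + cinner u y"
  by (simp add: cinner_def sum.distrib algebra_simps)
lemma cinner_diff: "cinner u (x - y) = cinner u x - cinner u y"
  by (simp add: cinner_def sum_subtractf algebra_simps)
lemma cinner_minus: "cinner u (- y) = - cinner u y"
  by (simp add: cinner_def sum_negf)

lemma scaleR_cx: "(c *\<^sub>R (z::complex)) = of_real c * z"
  by (simp add: scaleR_conv_of_real)

lemma scaleR_cvec_eq: "(c *\<^sub>R (x::complex^'n)) = (complex_of_real c) *s x"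
  unfolding vec_eq_iff by (simp add: scaleR_cx)

lemma weak_dual:
  assumes u: "u \<in> S1 \<alpha> B b" and l: "\<forall>k. 0 \<le> l $ k" and r: "\<forall>i. 0 \<le> r $ i"
    and w: "w = ctrans B *v cvec l + \<beta> - cvec r + (\<chi> i. cnj \<rho>)"
  shows "Re (cinner u w) \<le> (\<Sum>k\<in>UNIV. l $ k * b $ k) + \<alpha> * norm \<beta> + Re \<rho>"
proof -
  from u have un: "norm u \<le> \<alpha>" and ur: "\<forall>i. 0 \<le> Re (u $ i)" and us: "(\<Sum>i\<in>UNIV. u $ i) = 1"
    and ub: "\<forall>k. Re ((B *v u) $ k) \<le> b $ k" by (auto simp: S1_def)
  have "Re (cinner u w) = (\<Sum>k\<in>UNIV. l $ k * Re ((B *v u) $ k)) + Re (cinner u \<beta>)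
      - (\<Sum>i\<in>UNIV. r $ i * Re (u $ i)) + Re \<rho>"
    by (simp add: w cinner_add cinner_diff Re_cinner_Bl Re_cinner_cvec cinner_const us)
  also have "\<dots> \<le> (\<Sum>k\<in>UNIV. l $ k * b $ k) + \<alpha> * norm \<beta> - 0 + Re \<rho>"
  proof -
    have "(\<Sum>k\<in>UNIV. l $ k * Re ((B *v u) $ k)) \<le> (\<Sum>k\<in>UNIV. l $ k * b $ k)"
      by (rule sum_mono) (simp add: l ub mult_left_mono)
    moreover have "Re (cinner u \<beta>) \<le> \<alpha> * norm \<beta>"
      using Re_cinner_le[of u \<beta>] un by (meson mult_right_mono norm_ge_zero order_trans)
    moreover have "0 \<le> (\<Sum>i\<in>UNIV. r $ i * Re (u $ i))"
      by (rule sum_nonneg) (simp add: r ur)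
    ultimately show ?thesis by linarith
  qed
  finally show ?thesis by simp
qed

lemma S1_closed: fixes B :: "complex^'n^'l" shows "closed (S1 \<alpha> B b)"
proof -
  have "S1 \<alpha> B b = {u. norm u \<le> \<alpha>} \<inter> (\<Inter>i. {u. 0 \<le> Re (u $ i)}) \<inter> {u. (\<Sum>i\<in>UNIV. u $ i) = 1}
     \<inter> (\<Inter>k. {u. Re ((B *v u) $ k) \<le> b $ k})" by (auto simp: S1_def)
  also have "closed \<dots>"
  proof -
    have c1: "closed {u::complex^'n. 0 \<le> Re (u $ i)}" for i
      by (intro closed_Collect_le continuous_intros)
    have c2: "closed {u::complex^'n. Re ((B *v u) $ k) \<le> b $ k}" for k
      unfolding matrix_vector_mult_def by (simp, intro closed_Collect_le continuous_intros)
    have c3: "closed {u::complex^'n. (\<Sum>i\<in>UNIV. u $ i) = 1}"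
      by (intro closed_Collect_eq continuous_intros)
    show ?thesis using c1 c2 c3
      by (intro closed_Int closed_INT ballI closed_Collect_le continuous_intros) auto
  qed
  finally show ?thesis .
qed

lemma S1_bounded: "bounded (S1 \<alpha> B b)"
  unfolding bounded_iff S1_def by auto

lemma S1_compact: "compact (S1 \<alpha> B b)"
  using S1_closed S1_bounded compact_eq_bounded_closed by blast

lemma S1_convex: fixes B :: "complex^'n^'l" shows "convex (S1 \<alpha> B b)"
  unfolding convex_def
proof (intro ballI allI impI)
  fix x y :: "complex^'n" and p q :: real
  assume x: "x \<in> S1 \<alpha> B b" and y: "y \<in> S1 \<alpha> B b" and pq: "0 \<le> p" "0 \<le> q" "p + q = 1"
  have "norm (p *\<^sub>R x + q *\<^sub>R y) \<le> p * norm x + q * norm y"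
    using norm_triangle_ineq[of "p *\<^sub>R x" "q *\<^sub>R y"] pq by simp
  also have "\<dots> \<le> p * \<alpha> + q * \<alpha>"
    using x y pq by (intro add_mono mult_left_mono) (auto simp: S1_def)
  finally have n: "norm (p *\<^sub>R x + q *\<^sub>R y) \<le> \<alpha>" using pq by (simp add: distrib_right[symmetric])
  have s: "(\<Sum>i\<in>UNIV. (p *\<^sub>R x + q *\<^sub>R y) $ i) = 1"
    using x y pq by (simp add: S1_def sum.distrib scaleR_cx sum_distrib_left[symmetric]
        flip: of_real_add)
  have r: "\<forall>i. 0 \<le> Re ((p *\<^sub>R x + q *\<^sub>R y) $ i)"
    using x y pq by (auto simp: S1_def)
  have bb: "\<forall>k. Re ((B *v (p *\<^sub>R x + q *\<^sub>R y)) $ k) \<le> b $ k"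
  proof
    fix k
    have "Re ((B *v (p *\<^sub>R x + q *\<^sub>R y)) $ k) = p * Re ((B *v x) $ k) + q * Re ((B *v y) $ k)"
      by (simp add: matrix_vector_right_distrib scaleR_cvec_eq vector_scalar_commute)
    also have "\<dots> \<le> p * b $ k + q * b $ k"
      using x y pq by (intro add_mono mult_left_mono) (auto simp: S1_def)
    finally show "Re ((B *v (p *\<^sub>R x + q *\<^sub>R y)) $ k) \<le> b $ k" using pq by (simp add: distrib_right[symmetric])
  qed
  show "p *\<^sub>R x + q *\<^sub>R y \<in> S1 \<alpha> B b" using n s r bb by (simp add: S1_def)
qed


lemma ray_nonneg: fixes C m :: real assumes "\<forall>T\<ge>0. 0 \<le> C + T * m" shows "0 \<le> m"
proof (rule ccontr)
  assume "\<not> 0 \<le> m"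
  hence m: "m < 0" by simp
  have T: "(\<bar>C\<bar> + 1) / (- m) \<ge> 0" using m by (intro divide_nonneg_pos) auto
  have "0 \<le> C + ((\<bar>C\<bar> + 1) / (- m)) * m" using assms T by blast
  also have "((\<bar>C\<bar> + 1) / (- m)) * m = - (\<bar>C\<bar> + 1)" using m by (simp add: field_simps)
  finally show False by linarith
qed

lemma eps_nonneg: fixes X m :: real assumes "0 \<le> m" "\<forall>e>0. 0 \<le> X + m * e" shows "0 \<le> X"
proof (rule ccontr)
  assume "\<not> 0 \<le> X"
  hence X: "X < 0" by simp
  define e where "e = - X / (2 * (m + 1))"
  have e: "e > 0" using X assms(1) unfolding e_def by (intro divide_pos_pos) auto
  have "0 \<le> X + m * e" using assms(2) e by blast
  moreover have "m * e \<le> (m + 1) * e" using e by simp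
  moreover have "(m + 1) * e = - X / 2" using assms(1) by (simp add: e_def field_simps)
  ultimately show False using X by linarith
qed

lemma ray_le: fixes X R :: real assumes "\<forall>T\<ge>0. T * X \<le> R" shows "X \<le> 0"
  using ray_nonneg[of R "- X"] assms by (simp add: algebra_simps)

lemma Re_cinner_scaleR_lin: "Re (cinner (p *\<^sub>R x + q *\<^sub>R y) w) = p * Re (cinner x w) + q * Re (cinner y w)"
  by (simp add: Re_cinner inner_add_left)

lemma Re_Bv_lin: "Re ((B *v (p *\<^sub>R x + q *\<^sub>R y)) $ k) = p * Re ((B *v x) $ k) + q * Re ((B *v y) $ k)"
  by (simp add: matrix_vector_right_distrib scaleR_cvec_eq vector_scalar_commute)

lemma sum_lin: "(\<Sum>i\<in>UNIV. (p *\<^sub>R x + q *\<^sub>R (y::complex^'n)) $ i) = p *\<^sub>R (\<Sum>i\<in>UNIV. x $ i) + q *\<^sub>R (\<Sum>i\<in>UNIV. y $ i)"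
  by (simp add: sum.distrib scaleR_sum_right)


lemma inner_dual:
  fixes B :: "complex^'n^'l" and b :: "real^'l" and w us u0 :: "complex^'n"
  assumes s0: "u0 \<in> S1 \<alpha> B b" and s1: "norm u0 < \<alpha>" and s2: "\<forall>i. 0 < Re (u0 $ i)"
    and s3: "\<forall>k. Re ((B *v u0) $ k) < b $ k"
    and usin: "us \<in> S1 \<alpha> B b" and opt: "\<forall>u\<in>S1 \<alpha> B b. Re (cinner u w) \<le> Re (cinner us w)"
  shows "\<exists>l \<beta> \<rho> r. (\<forall>k. 0 \<le> l $ k) \<and> (\<forall>i. 0 \<le> r $ i)
     \<and> w = ctrans B *v cvec l + \<beta> - cvec r + (\<chi> i. cnj \<rho>)
     \<and> (\<Sum>k\<in>UNIV. l $ k * b $ k) + \<alpha> * norm \<beta> + Re \<rho> \<le> Re (cinner us w)"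
proof -
  define L where "L = Re (cinner us w)"
  define f where "f u = Re (cinner u w)" for u
  define K :: "((real^'l) \<times> real \<times> (real^'n) \<times> complex \<times> real) set" where
    "K = {(s, t, p, e, c). \<exists>u. (\<forall>k. Re ((B *v u) $ k) - b $ k \<le> s $ k) \<and> norm u - \<alpha> \<le> t
        \<and> (\<forall>i. - Re (u $ i) \<le> p $ i) \<and> e = (\<Sum>i\<in>UNIV. u $ i) - 1 \<and> c < f u - L}"
  have Kmem: "(s, t, p, e, c) \<in> K" if "\<forall>k. Re ((B *v u) $ k) - b $ k \<le> s $ k" "norm u - \<alpha> \<le> t"
        "\<forall>i. - Re (u $ i) \<le> p $ i" "e = (\<Sum>i\<in>UNIV. u $ i) - 1" "c < f u - L" for s t p e c u
    using that unfolding K_def by blast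
  have K0: "0 \<notin> K"
  proof
    assume "0 \<in> K"
    then obtain u where "\<forall>k. Re ((B *v u) $ k) - b $ k \<le> 0" "norm u - \<alpha> \<le> 0"
        "\<forall>i. - Re (u $ i) \<le> 0" "0 = (\<Sum>i\<in>UNIV. u $ i) - 1" "0 < f u - L"
      unfolding K_def by (auto simp: zero_prod_def)
    hence "u \<in> S1 \<alpha> B b" "L < f u" by (auto simp: S1_def)
    thus False using opt unfolding f_def L_def by force
  qed
  have Kconv: "convex K"
    unfolding convex_def
  proof (intro ballI allI impI)
    fix x y :: "(real^'l) \<times> real \<times> (real^'n) \<times> complex \<times> real" and p q :: real
    assume x: "x \<in> K" and y: "y \<in> K" and pq: "0 \<le> p" "0 \<le> q" "p + q = 1"
    obtain s1 t1 pp1 e1 c1 where xe: "x = (s1, t1, pp1, e1, c1)" by (metis prod.collapse)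
    obtain s2 t2 pp2 e2 c2 where ye: "y = (s2, t2, pp2, e2, c2)" by (metis prod.collapse)
    obtain u1 where u1: "\<forall>k. Re ((B *v u1) $ k) - b $ k \<le> s1 $ k" "norm u1 - \<alpha> \<le> t1"
        "\<forall>i. - Re (u1 $ i) \<le> pp1 $ i" "e1 = (\<Sum>i\<in>UNIV. u1 $ i) - 1" "c1 < f u1 - L"
      using x unfolding xe K_def by blast
    obtain u2 where u2: "\<forall>k. Re ((B *v u2) $ k) - b $ k \<le> s2 $ k" "norm u2 - \<alpha> \<le> t2"
        "\<forall>i. - Re (u2 $ i) \<le> pp2 $ i" "e2 = (\<Sum>i\<in>UNIV. u2 $ i) - 1" "c2 < f u2 - L"
      using y unfolding ye K_def by blast
    have qp: "q = 1 - p" using pq by simp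
    have p1: "p \<le> 1" using pq by simp
    define u where "u = p *\<^sub>R u1 + q *\<^sub>R u2"
    have "(p *\<^sub>R s1 + q *\<^sub>R s2, p * t1 + q * t2, p *\<^sub>R pp1 + q *\<^sub>R pp2, p *\<^sub>R e1 + q *\<^sub>R e2, p * c1 + q * c2) \<in> K"
    proof (rule Kmem[where u = u])
      show "\<forall>k. Re ((B *v u) $ k) - b $ k \<le> (p *\<^sub>R s1 + q *\<^sub>R s2) $ k"
      proof
        fix k
        have a1: "p * Re ((B *v u1) $ k) \<le> p * (s1 $ k + b $ k)"
          using u1(1) pq by (intro mult_left_mono) (auto simp: algebra_simps)
        have a2: "q * Re ((B *v u2) $ k) \<le> q * (s2 $ k + b $ k)"
          using u2(1) pq by (intro mult_left_mono) (auto simp: algebra_simps)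
        show "Re ((B *v u) $ k) - b $ k \<le> (p *\<^sub>R s1 + q *\<^sub>R s2) $ k"
          using a1 a2 unfolding u_def Re_Bv_lin qp by (simp add: algebra_simps)
      qed
      show "norm u - \<alpha> \<le> p * t1 + q * t2"
      proof -
        have "norm u \<le> p * norm u1 + q * norm u2"
          using norm_triangle_ineq[of "p *\<^sub>R u1" "q *\<^sub>R u2"] pq by (simp add: u_def)
        moreover have "p * norm u1 \<le> p * (t1 + \<alpha>)" "q * norm u2 \<le> q * (t2 + \<alpha>)"
          using u1(2) u2(2) pq by (auto intro!: mult_left_mono)
        ultimately show ?thesis unfolding qp by (simp add: algebra_simps)
      qed
      show "\<forall>i. - Re (u $ i) \<le> (p *\<^sub>R pp1 + q *\<^sub>R pp2) $ i"
      proof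
        fix i
        have a1: "p * (- Re (u1 $ i)) \<le> p * pp1 $ i"
          using u1(3) pq by (intro mult_left_mono) auto
        have a2: "q * (- Re (u2 $ i)) \<le> q * pp2 $ i"
          using u2(3) pq by (intro mult_left_mono) auto
        show "- Re (u $ i) \<le> (p *\<^sub>R pp1 + q *\<^sub>R pp2) $ i"
          using a1 a2 unfolding u_def by (simp add: algebra_simps)
      qed
      show "p *\<^sub>R e1 + q *\<^sub>R e2 = (\<Sum>i\<in>UNIV. u $ i) - 1"
        unfolding u_def sum_lin u1(4) u2(4) qp by (simp add: algebra_simps)
      show "p * c1 + q * c2 < f u - L"
      proof -
        have fu: "f u - L = p * (f u1 - L) + q * (f u2 - L)"
          unfolding u_def f_def Re_cinner_scaleR_lin qp by (simp add: algebra_simps)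
        show ?thesis
        proof (cases "p = 0")
          case True thus ?thesis using fu u2(5) qp by simp
        next
          case False
          hence "p * c1 < p * (f u1 - L)" using pq u1(5) by simp
          moreover have "q * c2 \<le> q * (f u2 - L)" using pq u2(5) by (intro mult_left_mono) auto
          ultimately show ?thesis using fu by simp
        qed
      qed
    qed
    thus "p *\<^sub>R x + q *\<^sub>R y \<in> K" by (simp add: xe ye)
  qed
  obtain a where a0: "a \<noteq> 0" and aK: "\<forall>x\<in>K. 0 \<le> inner a x"
    using separating_hyperplane_set_0[OF Kconv K0] by blast
  obtain ms mt mp nu mc where aeq: "a = (ms, mt, mp, nu, mc)" by (metis prod.collapse)
  define G where "G u = (\<Sum>k\<in>UNIV. ms $ k * (Re ((B *v u) $ k) - b $ k)) + mt * (norm u - \<alpha>)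
      + (\<Sum>i\<in>UNIV. mp $ i * (- Re (u $ i))) + inner nu ((\<Sum>i\<in>UNIV. u $ i) - 1)" for u
  have key: "0 \<le> G u + (\<Sum>k\<in>UNIV. ms $ k * ss $ k) + mt * st + (\<Sum>i\<in>UNIV. mp $ i * sp $ i)
      + mc * (f u - L - e)"
    if "\<forall>k. 0 \<le> ss $ k" "0 \<le> st" "\<forall>i. 0 \<le> sp $ i" "0 < e" for u ss st sp e
  proof -
    have "(\<chi> k. Re ((B *v u) $ k) - b $ k + ss $ k, norm u - \<alpha> + st, \<chi> i. - Re (u $ i) + sp $ i,
        (\<Sum>i\<in>UNIV. u $ i) - 1, f u - L - e) \<in> K"
      using that by (intro Kmem[where u = u]) auto
    hence "0 \<le> inner a (\<chi> k. Re ((B *v u) $ k) - b $ k + ss $ k, norm u - \<alpha> + st, \<chi> i. - Re (u $ i) + sp $ i,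
        (\<Sum>i\<in>UNIV. u $ i) - 1, f u - L - e)" using aK by blast
    thus ?thesis
      by (simp add: aeq G_def inner_vec_def algebra_simps sum.distrib sum_subtractf sum_negf)
  qed
  have u0s: "(\<Sum>i\<in>UNIV. u0 $ i) = 1" using s0 by (simp add: S1_def)
  have ms_nn: "0 \<le> ms $ k" for k
  proof (rule ray_nonneg[where C = "G u0 + mc * (f u0 - L - 1)"], intro allI impI)
    fix T :: real assume T: "0 \<le> T"
    have "0 \<le> G u0 + (\<Sum>j\<in>UNIV. ms $ j * (\<chi> j. if j = k then T else 0) $ j) + mt * 0
      + (\<Sum>i\<in>UNIV. mp $ i * (0::real^'n) $ i) + mc * (f u0 - L - 1)"
      using T by (intro key) auto
    thus "0 \<le> G u0 + mc * (f u0 - L - 1) + T * ms $ k"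
      by (simp add: if_distrib cong: if_cong) (simp add: algebra_simps)
  qed
  have mp_nn: "0 \<le> mp $ k" for k
  proof (rule ray_nonneg[where C = "G u0 + mc * (f u0 - L - 1)"], intro allI impI)
    fix T :: real assume T: "0 \<le> T"
    have "0 \<le> G u0 + (\<Sum>j\<in>UNIV. ms $ j * (0::real^'l) $ j) + mt * 0
      + (\<Sum>i\<in>UNIV. mp $ i * (\<chi> j. if j = k then T else 0) $ i) + mc * (f u0 - L - 1)"
      using T by (intro key) auto
    thus "0 \<le> G u0 + mc * (f u0 - L - 1) + T * mp $ k"
      by (simp add: if_distrib cong: if_cong) (simp add: algebra_simps)
  qed
  have mt_nn: "0 \<le> mt"
  proof (rule ray_nonneg[where C = "G u0 + mc * (f u0 - L - 1)"], intro allI impI)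
    fix T :: real assume T: "0 \<le> T"
    have "0 \<le> G u0 + (\<Sum>j\<in>UNIV. ms $ j * (0::real^'l) $ j) + mt * T
      + (\<Sum>i\<in>UNIV. mp $ i * (0::real^'n) $ i) + mc * (f u0 - L - 1)"
      using T by (intro key) auto
    thus "0 \<le> G u0 + mc * (f u0 - L - 1) + T * mt" by (simp add: algebra_simps)
  qed
  define m0 where "m0 = - mc"
  have m0_nn: "0 \<le> m0" unfolding m0_def
  proof (rule ray_nonneg[where C = "G u0 + mc * (f u0 - L - 1)"], intro allI impI)
    fix T :: real assume T: "0 \<le> T"
    have "0 \<le> G u0 + (\<Sum>j\<in>UNIV. ms $ j * (0::real^'l) $ j) + mt * 0
      + (\<Sum>i\<in>UNIV. mp $ i * (0::real^'n) $ i) + mc * (f u0 - L - (T + 1))"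
      using T by (intro key) auto
    thus "0 \<le> G u0 + mc * (f u0 - L - 1) + T * - mc" by (simp add: algebra_simps)
  qed
  have main: "m0 * (f u - L) \<le> G u" for u
  proof -
    have "0 \<le> (G u - m0 * (f u - L)) + m0 * e" if "e > 0" for e
    proof -
      have "0 \<le> G u + (\<Sum>j\<in>UNIV. ms $ j * (0::real^'l) $ j) + mt * 0
        + (\<Sum>i\<in>UNIV. mp $ i * (0::real^'n) $ i) + mc * (f u - L - e)"
        using that by (intro key) auto
      thus ?thesis by (simp add: m0_def algebra_simps)
    qed
    hence "0 \<le> G u - m0 * (f u - L)" using eps_nonneg[OF m0_nn] by blast
    thus ?thesis by simp
  qed
  show ?thesis
  proof (cases "m0 = 0")
    case True
    have G0: "0 \<le> G u0" using main[of u0] True by simp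
    define T1 where "T1 = (\<Sum>k\<in>UNIV. ms $ k * (Re ((B *v u0) $ k) - b $ k))"
    define T3 where "T3 = (\<Sum>i\<in>UNIV. mp $ i * (- Re (u0 $ i)))"
    have T1n: "T1 \<le> 0" unfolding T1_def
      by (rule sum_nonpos) (metis ms_nn s3 diff_less_0_iff_less less_eq_real_def mult_nonneg_nonpos)
    have T3n: "T3 \<le> 0" unfolding T3_def
      by (rule sum_nonpos) (metis ms_nn mp_nn s2 neg_le_0_iff_le less_eq_real_def mult_nonneg_nonpos)
    have T2n: "mt * (norm u0 - \<alpha>) \<le> 0" using mt_nn s1 by (simp add: mult_nonneg_nonpos)
    have "G u0 = T1 + mt * (norm u0 - \<alpha>) + T3" by (simp add: G_def T1_def T3_def u0s)
    hence z: "T1 = 0" "T3 = 0" "mt * (norm u0 - \<alpha>) = 0" using G0 T1n T2n T3n by linarith+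
    have mt0: "mt = 0" using z(3) s1 by simp
    have ms0: "ms $ k = 0" for k
    proof -
      have hh: "\<And>x. x \<in> UNIV \<Longrightarrow> 0 \<le> - (ms $ x * (Re ((B *v u0) $ x) - b $ x))"
        using ms_nn s3 by (simp add: mult_nonneg_nonpos less_imp_le)
      have "\<forall>k\<in>UNIV. - (ms $ k * (Re ((B *v u0) $ k) - b $ k)) = 0"
        using sum_nonneg_eq_0_iff[of UNIV "\<lambda>x. - (ms $ x * (Re ((B *v u0) $ x) - b $ x))"] hh z(1) unfolding T1_def by (simp add: sum_negf)
      thus ?thesis using s3[rule_format, of k] by auto
    qed
    have mp0: "mp $ k = 0" for k
    proof -
      have hh: "\<And>x. x \<in> UNIV \<Longrightarrow> 0 \<le> - (mp $ x * (- Re (u0 $ x)))"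
        using mp_nn s2 by (simp add: less_imp_le)
      have "\<forall>k\<in>UNIV. - (mp $ k * (- Re (u0 $ k))) = 0"
        using sum_nonneg_eq_0_iff[of UNIV "\<lambda>x. - (mp $ x * (- Re (u0 $ x)))"] hh z(2) unfolding T3_def by (simp add: sum_negf)
      thus ?thesis using s2[rule_format, of k] by auto
    qed
    define i0 :: 'n where "i0 = undefined"
    define u1 :: "complex^'n" where "u1 = (\<chi> i. if i = i0 then 1 - nu else 0)"
    have "(\<Sum>i\<in>UNIV. u1 $ i) = 1 - nu" by (simp add: u1_def)
    hence "0 \<le> inner nu (- nu)" using main[of u1] True by (simp add: G_def ms0 mp0 mt0)
    hence nu0: "nu = 0" by (simp add: inner_minus_right) (metis inner_gt_zero_iff not_le)
    have "a = 0" using ms0 mp0 mt0 nu0 True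
      by (simp add: aeq m0_def vec_eq_iff zero_prod_def)
    thus ?thesis using a0 by simp
  next
    case False
    hence m0p: "0 < m0" using m0_nn by simp
    define l :: "real^'l" where "l = (1 / m0) *\<^sub>R ms"
    define r :: "real^'n" where "r = (1 / m0) *\<^sub>R mp"
    define \<tau> where "\<tau> = mt / m0"
    define nu' where "nu' = (1 / m0) *\<^sub>R nu"
    define \<beta> where "\<beta> = w - ctrans B *v cvec l + cvec r - (\<chi> i. nu')"
    have weq: "w = ctrans B *v cvec l + \<beta> - cvec r + (\<chi> i. cnj (cnj nu'))"
      by (simp add: \<beta>_def)
    have eqs: "ms = m0 *\<^sub>R l" "mp = m0 *\<^sub>R r" "mt = m0 * \<tau>" "nu = m0 *\<^sub>R nu'"
      using m0p by (simp_all add: l_def r_def \<tau>_def nu'_def)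
    have l_nn: "\<forall>k. 0 \<le> l $ k" using ms_nn m0p by (simp add: l_def)
    have r_nn: "\<forall>k. 0 \<le> r $ k" using mp_nn m0p by (simp add: r_def)
    have tau_nn: "0 \<le> \<tau>" using mt_nn m0p by (simp add: \<tau>_def)
    have fu: "f u = (\<Sum>k\<in>UNIV. l $ k * Re ((B *v u) $ k)) + Re (cinner u \<beta>)
       - (\<Sum>i\<in>UNIV. r $ i * Re (u $ i)) + inner nu' (\<Sum>i\<in>UNIV. u $ i)" for u
      unfolding f_def
      by (subst weq) (simp add: cinner_add cinner_diff Re_cinner_Bl Re_cinner_cvec cinner_const inner_complex_def sum_negf)
    have Gu: "G u = m0 * ((\<Sum>k\<in>UNIV. l $ k * Re ((B *v u) $ k)) - (\<Sum>k\<in>UNIV. l $ k * b $ k)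
       + \<tau> * (norm u - \<alpha>) - (\<Sum>i\<in>UNIV. r $ i * Re (u $ i)) + inner nu' (\<Sum>i\<in>UNIV. u $ i) - Re nu')" for u
      unfolding G_def eqs
      by (simp add: algebra_simps sum_distrib_left sum_subtractf sum_negf inner_diff_right)
    have H: "Re (cinner u \<beta>) - \<tau> * norm u \<le> L - (\<Sum>k\<in>UNIV. l $ k * b $ k) - \<tau> * \<alpha> - Re nu'" for u
    proof -
      have "m0 * (f u - L) \<le> m0 * ((\<Sum>k\<in>UNIV. l $ k * Re ((B *v u) $ k)) - (\<Sum>k\<in>UNIV. l $ k * b $ k)
       + \<tau> * (norm u - \<alpha>) - (\<Sum>i\<in>UNIV. r $ i * Re (u $ i)) + inner nu' (\<Sum>i\<in>UNIV. u $ i) - Re nu')"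
        using main[of u] Gu[of u] by simp
      hence "f u - L \<le> (\<Sum>k\<in>UNIV. l $ k * Re ((B *v u) $ k)) - (\<Sum>k\<in>UNIV. l $ k * b $ k)
       + \<tau> * (norm u - \<alpha>) - (\<Sum>i\<in>UNIV. r $ i * Re (u $ i)) + inner nu' (\<Sum>i\<in>UNIV. u $ i) - Re nu'"
        using m0p by simp
      thus ?thesis unfolding fu by (simp add: algebra_simps)
    qed
    define R where "R = L - (\<Sum>k\<in>UNIV. l $ k * b $ k) - \<tau> * \<alpha> - Re nu'"
    have R0: "0 \<le> R" using H[of 0] by (simp add: R_def cinner_def)
    have "\<forall>T\<ge>0. T * (norm \<beta> * (norm \<beta> - \<tau>)) \<le> R"
    proof (intro allI impI)
      fix T :: real assume "0 \<le> T"
      have "Re (cinner (T *\<^sub>R \<beta>) \<beta>) - \<tau> * norm (T *\<^sub>R \<beta>) \<le> R" using H unfolding R_def by blast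
      moreover have "Re (cinner (T *\<^sub>R \<beta>) \<beta>) = T * (norm \<beta>)^2"
        by (simp add: Re_cinner power2_norm_eq_inner)
      ultimately show "T * (norm \<beta> * (norm \<beta> - \<tau>)) \<le> R" using \<open>0 \<le> T\<close>
        by (simp add: algebra_simps power2_eq_square)
    qed
    hence "norm \<beta> * (norm \<beta> - \<tau>) \<le> 0" by (rule ray_le)
    hence nb: "norm \<beta> \<le> \<tau>" using tau_nn
      by (smt (verit) mult_pos_pos norm_ge_zero)
    have al: "0 \<le> \<alpha>" using s1 norm_ge_zero[of u0] by linarith
    have "(\<Sum>k\<in>UNIV. l $ k * b $ k) + \<alpha> * norm \<beta> + Re (cnj nu') \<le> L"
      using R0 mult_left_mono[OF nb al] unfolding R_def by (simp add: mult.commute[of \<tau> \<alpha>])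
    thus ?thesis using l_nn r_nn weq unfolding L_def by blast
  qed
qed


lemma cont_mv: fixes A :: "complex^'m^'n" assumes "continuous_on S f" shows "continuous_on S (\<lambda>x. A *v f x)"
  unfolding matrix_vector_mult_def using assms by (intro continuous_intros)

lemma saddle_exists:
  fixes A :: "complex^'m^'n" and X :: "(complex^'n) set" and Y :: "(complex^'m) set"
  assumes X: "compact X" "convex X" "X \<noteq> {}" and Y: "compact Y" "convex Y" "Y \<noteq> {}"
  shows "\<exists>u v. saddle_point A X Y u v"
proof -
  define F where "F z = (closest_point X (fst z + A *v snd z), closest_point Y (snd z - ctrans A *v fst z))" for z
  have cX: "closed X" and cY: "closed Y" using X Y compact_imp_closed by auto
  have cont: "continuous_on (X \<times> Y) F"
    unfolding F_def
    by (intro continuous_on_Pair continuous_on_compose2[OF continuous_on_closest_point[OF X(2) cX X(3)]]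
        continuous_on_compose2[OF continuous_on_closest_point[OF Y(2) cY Y(3)]]
        continuous_intros cont_mv) auto
  have im: "F \<in> X \<times> Y \<rightarrow> X \<times> Y"
    using closest_point_in_set[OF cX X(3)] closest_point_in_set[OF cY Y(3)] by (auto simp: F_def)
  obtain z where z: "z \<in> X \<times> Y" "F z = z"
    using brouwer[OF compact_Times[OF X(1) Y(1)] convex_Times[OF X(2) Y(2)] _ cont im] X(3) Y(3) by auto
  obtain u v where zuv: "z = (u, v)" by (metis prod.collapse)
  have uX: "u \<in> X" and vY: "v \<in> Y" using z zuv by auto
  have fu: "closest_point X (u + A *v v) = u" and fv: "closest_point Y (v - ctrans A *v u) = v"
    using z(2) zuv by (auto simp: F_def)
  have h1: "Re (cinner x (A *v v)) \<le> Re (cinner u (A *v v))" if "x \<in> X" for x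
  proof -
    have "inner ((u + A *v v) - u) (x - u) \<le> 0"
      using closest_point_dot[OF X(2) cX that, of "u + A *v v"] fu by simp
    thus ?thesis by (simp add: Re_cinner inner_diff_right inner_commute)
  qed
  have h2: "Re (cinner u (A *v v)) \<le> Re (cinner u (A *v y))" if "y \<in> Y" for y
  proof -
    have "inner ((v - ctrans A *v u) - v) (y - v) \<le> 0"
      using closest_point_dot[OF Y(2) cY that, of "v - ctrans A *v u"] fv by simp
    hence "inner v (ctrans A *v u) \<le> inner y (ctrans A *v u)"
      by (simp add: inner_diff_right inner_diff_left inner_commute)
    hence "Re (cinner v (ctrans A *v u)) \<le> Re (cinner y (ctrans A *v u))" by (simp add: Re_cinner)
    thus ?thesis by (simp add: cinner_ctrans)
  qed
  show ?thesis using uX vY h1 h2 unfolding saddle_point_def by blast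
qed


lemma neg_mv: "(- D) *v v = - (D *v (v::complex^'m))"
  by (simp add: matrix_vector_mult_def vec_eq_iff sum_negf)

lemma ctrans_neg: "ctrans (- D) = - ctrans D"
  by (simp add: ctrans_def vec_eq_iff)

lemma S2_eq: "S2 \<alpha> D d = S1 \<alpha> (- D) (- d)"
  by (auto simp: S1_def S2_def neg_mv)

lemma P_feas_S2: "P_feasible A B D d \<alpha>2 v l \<beta> \<rho> r \<Longrightarrow> v \<in> S2 \<alpha>2 D d"
  by (auto simp: P_feasible_def S2_def)

lemma D_feas_S1: "D_feasible A B b D \<alpha>1 u l \<beta> \<rho> r \<Longrightarrow> u \<in> S1 \<alpha>1 B b"
  by (auto simp: D_feasible_def S1_def)

lemma weak_P:
  assumes "P_feasible A B D d \<alpha>2 v l \<beta> \<rho> r" "u \<in> S1 \<alpha>1 B b"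
  shows "Re (cinner u (A *v v)) \<le> P_obj b \<alpha>1 l \<beta> \<rho>"
proof -
  have eq: "A *v v - ctrans B *v cvec l - \<beta> + cvec r - (\<chi> i. cnj \<rho>) = 0"
    and l: "\<forall>k. 0 \<le> l $ k" and r: "\<forall>i. 0 \<le> r $ i" using assms(1) by (auto simp: P_feasible_def)
  have "A *v v = (A *v v - ctrans B *v cvec l - \<beta> + cvec r - (\<chi> i. cnj \<rho>))
     + (ctrans B *v cvec l + \<beta> - cvec r + (\<chi> i. cnj \<rho>))" by (simp add: algebra_simps)
  hence w: "A *v v = ctrans B *v cvec l + \<beta> - cvec r + (\<chi> i. cnj \<rho>)" using eq by simp
  show ?thesis using weak_dual[OF assms(2) l r w] by (simp add: P_obj_def)
qed

lemma weak_D: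
  assumes "D_feasible A B b D \<alpha>1 u l \<beta> \<rho> r" "v \<in> S2 \<alpha>2 D d"
  shows "D_obj d \<alpha>2 l \<beta> \<rho> \<le> Re (cinner u (A *v v))"
proof -
  have eq: "ctrans A *v u - ctrans D *v cvec l + \<beta> - cvec r + (\<chi> i. cnj \<rho>) = 0"
    and l: "\<forall>k. 0 \<le> l $ k" and r: "\<forall>i. 0 \<le> r $ i" using assms(1) by (auto simp: D_feasible_def)
  have "- (ctrans A *v u) = - (ctrans A *v u - ctrans D *v cvec l + \<beta> - cvec r + (\<chi> i. cnj \<rho>))
     + (ctrans (- D) *v cvec l + \<beta> - cvec r + (\<chi> i. cnj \<rho>))"
    by (simp add: algebra_simps ctrans_neg neg_mv)
  hence w: "- (ctrans A *v u) = ctrans (- D) *v cvec l + \<beta> - cvec r + (\<chi> i. cnj \<rho>)" using eq by simp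
  have v: "v \<in> S1 \<alpha>2 (- D) (- d)" using assms(2) S2_eq by metis
  have "Re (cinner v (- (ctrans A *v u))) = - Re (cinner u (A *v v))"
    by (simp add: cinner_minus cinner_ctrans)
  thus ?thesis using weak_dual[OF v l r w] by (simp add: D_obj_def sum_negf)
qed

lemma fwd:
  fixes A :: "complex ^ 'm ^ 'n" and B :: "complex ^ 'n ^ 'l" and b :: "real ^ 'l"
    and D :: "complex ^ 'm ^ 'q" and d :: "real ^ 'q"
  assumes slater1: "\<exists>u\<in>S1 \<alpha>1 B b. norm u < \<alpha>1 \<and> (\<forall>i. 0 < Re (u $ i))
                     \<and> (\<forall>k. Re ((B *v u) $ k) < b $ k)"
    and slater2: "\<exists>v\<in>S2 \<alpha>2 D d. norm v < \<alpha>2 \<and> (\<forall>i. 0 < Re (v $ i))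
                     \<and> (\<forall>k. d $ k < Re ((D *v v) $ k))"
    and sp: "saddle_point A (S1 \<alpha>1 B b) (S2 \<alpha>2 D d) us vs"
  shows "\<exists>l \<beta> \<rho> r. P_feasible A B D d \<alpha>2 vs l \<beta> \<rho> r \<and> P_obj b \<alpha>1 l \<beta> \<rho> \<le> Re (cinner us (A *v vs))"
    and "\<exists>l \<beta> \<rho> r. D_feasible A B b D \<alpha>1 us l \<beta> \<rho> r \<and> Re (cinner us (A *v vs)) \<le> D_obj d \<alpha>2 l \<beta> \<rho>"
proof -
  from sp have usS: "us \<in> S1 \<alpha>1 B b" and vsS: "vs \<in> S2 \<alpha>2 D d"
    and o1: "\<forall>u\<in>S1 \<alpha>1 B b. Re (cinner u (A *v vs)) \<le> Re (cinner us (A *v vs))"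
    and o2: "\<forall>v\<in>S2 \<alpha>2 D d. Re (cinner us (A *v vs)) \<le> Re (cinner us (A *v v))"
    by (auto simp: saddle_point_def)
  obtain u0 where u0: "u0 \<in> S1 \<alpha>1 B b" "norm u0 < \<alpha>1" "\<forall>i. 0 < Re (u0 $ i)" "\<forall>k. Re ((B *v u0) $ k) < b $ k"
    using slater1 by blast
  obtain v0 where v0: "v0 \<in> S2 \<alpha>2 D d" "norm v0 < \<alpha>2" "\<forall>i. 0 < Re (v0 $ i)" "\<forall>k. d $ k < Re ((D *v v0) $ k)"
    using slater2 by blast
  obtain l \<beta> \<rho> r where lr: "\<forall>k. 0 \<le> l $ k" "\<forall>i. 0 \<le> r $ i"
      and w: "A *v vs = ctrans B *v cvec l + \<beta> - cvec r + (\<chi> i. cnj \<rho>)"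
      and ob: "(\<Sum>k\<in>UNIV. l $ k * b $ k) + \<alpha>1 * norm \<beta> + Re \<rho> \<le> Re (cinner us (A *v vs))"
    using inner_dual[OF u0 usS o1] by blast
  have "P_feasible A B D d \<alpha>2 vs l \<beta> \<rho> r"
    using vsS lr w unfolding P_feasible_def S2_def by (simp add: algebra_simps)
  thus "\<exists>l \<beta> \<rho> r. P_feasible A B D d \<alpha>2 vs l \<beta> \<rho> r \<and> P_obj b \<alpha>1 l \<beta> \<rho> \<le> Re (cinner us (A *v vs))"
    using ob unfolding P_obj_def by blast
  have v0': "v0 \<in> S1 \<alpha>2 (- D) (- d)" "\<forall>k. Re (((- D) *v v0) $ k) < (- d) $ k"
    using v0(1) S2_eq[of \<alpha>2 D d] v0(4) by (auto simp: neg_mv)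
  have vsS': "vs \<in> S1 \<alpha>2 (- D) (- d)" using vsS S2_eq by metis
  have o2': "\<forall>v\<in>S1 \<alpha>2 (- D) (- d). Re (cinner v (- (ctrans A *v us))) \<le> Re (cinner vs (- (ctrans A *v us)))"
    using o2 unfolding S2_eq[symmetric] by (simp add: cinner_minus cinner_ctrans)
  obtain l2 \<beta>2 \<rho>2 r2 where lr2: "\<forall>k. 0 \<le> l2 $ k" "\<forall>i. 0 \<le> r2 $ i"
      and w2: "- (ctrans A *v us) = ctrans (- D) *v cvec l2 + \<beta>2 - cvec r2 + (\<chi> i. cnj \<rho>2)"
      and ob2: "(\<Sum>k\<in>UNIV. l2 $ k * (- d) $ k) + \<alpha>2 * norm \<beta>2 + Re \<rho>2 \<le> Re (cinner vs (- (ctrans A *v us)))"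
    using inner_dual[OF v0'(1) v0(2) v0(3) v0'(2) vsS' o2'] by blast
  have "ctrans A *v us = - (- (ctrans A *v us))" by simp
  also have "\<dots> = ctrans D *v cvec l2 - \<beta>2 + cvec r2 - (\<chi> i. cnj \<rho>2)"
    unfolding w2 by (simp add: ctrans_neg neg_mv algebra_simps)
  finally have w2': "ctrans A *v us = ctrans D *v cvec l2 - \<beta>2 + cvec r2 - (\<chi> i. cnj \<rho>2)" .
  have "D_feasible A B b D \<alpha>1 us l2 \<beta>2 \<rho>2 r2"
    using usS lr2 w2' unfolding D_feasible_def S1_def by (simp add: algebra_simps)
  moreover have "Re (cinner us (A *v vs)) \<le> D_obj d \<alpha>2 l2 \<beta>2 \<rho>2"
    using ob2 by (simp add: D_obj_def cinner_minus cinner_ctrans sum_negf)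
  ultimately show "\<exists>l \<beta> \<rho> r. D_feasible A B b D \<alpha>1 us l \<beta> \<rho> r \<and> Re (cinner us (A *v vs)) \<le> D_obj d \<alpha>2 l \<beta> \<rho>"
    by blast
qed

theorem theorem5:
  fixes A :: "complex ^ 'm ^ 'n" and B :: "complex ^ 'n ^ 'l" and b :: "real ^ 'l"
    and D :: "complex ^ 'm ^ 'q" and d :: "real ^ 'q"
    and \<alpha>1 \<alpha>2 :: real and us :: "complex ^ 'n" and vs :: "complex ^ 'm"
  assumes h\<alpha>1: "\<alpha>1 \<ge> 1 / sqrt (real CARD('n))"
    and h\<alpha>2: "\<alpha>2 \<ge> 1 / sqrt (real CARD('m))"
    and slater1: "\<exists>u\<in>S1 \<alpha>1 B b. norm u < \<alpha>1 \<and> (\<forall>i. 0 < Re (u $ i))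
                     \<and> (\<forall>k. Re ((B *v u) $ k) < b $ k)"
    and slater2: "\<exists>v\<in>S2 \<alpha>2 D d. norm v < \<alpha>2 \<and> (\<forall>i. 0 < Re (v $ i))
                     \<and> (\<forall>k. d $ k < Re ((D *v v) $ k))"
  shows "saddle_point A (S1 \<alpha>1 B b) (S2 \<alpha>2 D d) us vs \<longleftrightarrow>
    (\<exists>\<rho>1 r1 lam1 \<beta>1 \<rho>2 r2 lam2 \<beta>2.
        P_optimal A B b D d \<alpha>1 \<alpha>2 vs lam1 \<beta>1 \<rho>1 r1 \<and>
        D_optimal A B b D d \<alpha>1 \<alpha>2 us lam2 \<beta>2 \<rho>2 r2)"
proof
  assume sp: "saddle_point A (S1 \<alpha>1 B b) (S2 \<alpha>2 D d) us vs"
  from sp have usS: "us \<in> S1 \<alpha>1 B b" and vsS: "vs \<in> S2 \<alpha>2 D d"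
    and o1: "\<forall>u\<in>S1 \<alpha>1 B b. Re (cinner u (A *v vs)) \<le> Re (cinner us (A *v vs))"
    and o2: "\<forall>v\<in>S2 \<alpha>2 D d. Re (cinner us (A *v vs)) \<le> Re (cinner us (A *v v))"
    by (auto simp: saddle_point_def)
  obtain l \<beta> \<rho> r where P: "P_feasible A B D d \<alpha>2 vs l \<beta> \<rho> r" "P_obj b \<alpha>1 l \<beta> \<rho> \<le> Re (cinner us (A *v vs))"
    using fwd(1)[OF slater1 slater2 sp] by blast
  obtain l2 \<beta>2 \<rho>2 r2 where Dd: "D_feasible A B b D \<alpha>1 us l2 \<beta>2 \<rho>2 r2" "Re (cinner us (A *v vs)) \<le> D_obj d \<alpha>2 l2 \<beta>2 \<rho>2"
    using fwd(2)[OF slater1 slater2 sp] by blast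
  have "P_optimal A B b D d \<alpha>1 \<alpha>2 vs l \<beta> \<rho> r"
    unfolding P_optimal_def
  proof (intro conjI allI impI)
    fix v' l' \<beta>' \<rho>' r' assume f: "P_feasible A B D d \<alpha>2 v' l' \<beta>' \<rho>' r'"
    have "Re (cinner us (A *v vs)) \<le> Re (cinner us (A *v v'))" using o2 P_feas_S2[OF f] by blast
    also have "\<dots> \<le> P_obj b \<alpha>1 l' \<beta>' \<rho>'" using weak_P[OF f usS] .
    finally show "P_obj b \<alpha>1 l \<beta> \<rho> \<le> P_obj b \<alpha>1 l' \<beta>' \<rho>'" using P(2) by linarith
  qed (rule P(1))
  moreover have "D_optimal A B b D d \<alpha>1 \<alpha>2 us l2 \<beta>2 \<rho>2 r2"
    unfolding D_optimal_def
  proof (intro conjI allI impI)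
    fix u' l' \<beta>' \<rho>' r' assume f: "D_feasible A B b D \<alpha>1 u' l' \<beta>' \<rho>' r'"
    have "D_obj d \<alpha>2 l' \<beta>' \<rho>' \<le> Re (cinner u' (A *v vs))" using weak_D[OF f vsS] .
    also have "\<dots> \<le> Re (cinner us (A *v vs))" using o1 D_feas_S1[OF f] by blast
    finally show "D_obj d \<alpha>2 l' \<beta>' \<rho>' \<le> D_obj d \<alpha>2 l2 \<beta>2 \<rho>2" using Dd(2) by linarith
  qed (rule Dd(1))
  ultimately show "\<exists>\<rho>1 r1 lam1 \<beta>1 \<rho>2 r2 lam2 \<beta>2.
        P_optimal A B b D d \<alpha>1 \<alpha>2 vs lam1 \<beta>1 \<rho>1 r1 \<and>
        D_optimal A B b D d \<alpha>1 \<alpha>2 us lam2 \<beta>2 \<rho>2 r2" by blast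
next
  assume "\<exists>\<rho>1 r1 lam1 \<beta>1 \<rho>2 r2 lam2 \<beta>2.
        P_optimal A B b D d \<alpha>1 \<alpha>2 vs lam1 \<beta>1 \<rho>1 r1 \<and>
        D_optimal A B b D d \<alpha>1 \<alpha>2 us lam2 \<beta>2 \<rho>2 r2"
  then obtain \<rho>1 r1 lam1 \<beta>1 \<rho>2 r2 lam2 \<beta>2 where
      PO: "P_optimal A B b D d \<alpha>1 \<alpha>2 vs lam1 \<beta>1 \<rho>1 r1" and
      DO: "D_optimal A B b D d \<alpha>1 \<alpha>2 us lam2 \<beta>2 \<rho>2 r2" by blast
  have ne1: "S1 \<alpha>1 B b \<noteq> {}" using slater1 by blast
  have ne2: "S2 \<alpha>2 D d \<noteq> {}" using slater2 by blast
  obtain u0 v0 where sp0: "saddle_point A (S1 \<alpha>1 B b) (S2 \<alpha>2 D d) u0 v0"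
    using saddle_exists[OF S1_compact S1_convex ne1, of "S2 \<alpha>2 D d" A] ne2
      S1_compact[where \<alpha>=\<alpha>2 and B="- D" and b="- d"] S1_convex[where \<alpha>=\<alpha>2 and B="- D" and b="- d"] S2_eq[of \<alpha>2 D d] by auto
  define val where "val = Re (cinner u0 (A *v v0))"
  obtain l \<beta> \<rho> r where P0: "P_feasible A B D d \<alpha>2 v0 l \<beta> \<rho> r" "P_obj b \<alpha>1 l \<beta> \<rho> \<le> val"
    using fwd(1)[OF slater1 slater2 sp0] unfolding val_def by blast
  obtain l2 \<beta>2' \<rho>2' r2' where D0: "D_feasible A B b D \<alpha>1 u0 l2 \<beta>2' \<rho>2' r2'" "val \<le> D_obj d \<alpha>2 l2 \<beta>2' \<rho>2'"
    using fwd(2)[OF slater1 slater2 sp0] unfolding val_def by blast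
  have Pf: "P_feasible A B D d \<alpha>2 vs lam1 \<beta>1 \<rho>1 r1" and Pv: "P_obj b \<alpha>1 lam1 \<beta>1 \<rho>1 \<le> val"
    using PO P0 unfolding P_optimal_def by force+
  have Df: "D_feasible A B b D \<alpha>1 us lam2 \<beta>2 \<rho>2 r2" and Dv: "val \<le> D_obj d \<alpha>2 lam2 \<beta>2 \<rho>2"
    using DO D0 unfolding D_optimal_def by force+
  have usS: "us \<in> S1 \<alpha>1 B b" using D_feas_S1[OF Df] .
  have vsS: "vs \<in> S2 \<alpha>2 D d" using P_feas_S2[OF Pf] .
  have c1: "Re (cinner u (A *v vs)) \<le> Re (cinner us (A *v vs))" if "u \<in> S1 \<alpha>1 B b" for u
    using weak_P[OF Pf that] Pv Dv weak_D[OF Df vsS] by linarith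
  have c2: "Re (cinner us (A *v vs)) \<le> Re (cinner us (A *v v))" if "v \<in> S2 \<alpha>2 D d" for v
    using weak_P[OF Pf usS] Pv Dv weak_D[OF Df that] by linarith
  show "saddle_point A (S1 \<alpha>1 B b) (S2 \<alpha>2 D d) us vs"
    unfolding saddle_point_def using usS vsS c1 c2 by blast
qed

end
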